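(* Let $n\ge1$ and $1>\mu_1>\mu_2>\dots>\mu_{n+1}>0$. Let $\mathcal{P}$ be the set of all polynomials $p(x)=(x-\lambda_1)(x-\lambda_2)\cdots(x-\lambda_n)$ with real $\lambda_k$ satisfying $\mu_k\ge\lambda_k\ge\mu_{k+1}$ for $k=1,\dots,n$. Then there exist constants $C>0$ and $0<c<1$, depending only on $\mu_1,\dots,\mu_{n+1}$, such that for every $m\ge1$ and all $p_1,\dots,p_m\in\mathcal{P}$, $$\|F(p_1)F(p_2)\cdots F(p_m)\|\le Cc^m.$$
   Context: For a monic polynomial $p(z)=z^n+b_{n-1}z^{n-1}+\dots+b_0$, its Frobenius matrix $F(p)$ is the $n\times n$ matrix whose first row is $(-b_{n-1},-b_{n-2},\dots,-b_0)$, whose entries $(i+1,i)$ for $i=1,\dots,n-1$ equal $1$, and all other entries are $0$. $\|\cdot\|$ denotes any fixed matrix norm (all are equivalent). *)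

theory Defs
  imports "Jordan_Normal_Form.Matrix" "HOL-Computational_Algebra.Polynomial"
begin

definition frob :: "real poly \<Rightarrow> real mat" where
  "frob p = (let n = degree p in
     mat n n (\<lambda>(i,j). if i = 0 then - coeff p (n - 1 - j)
                      else if i = Suc j then 1 else 0))"

definition polyset :: "nat \<Rightarrow> (nat \<Rightarrow> real) \<Rightarrow> real poly set" where
  "polyset n mu = {(\<Prod>k\<in>{1..n}. [:- l k, 1:]) | l.
                    \<forall>k\<in>{1..n}. mu (Suc k) \<le> l k \<and> l k \<le> mu k}"

text \<open>A fixed matrix norm: entrywise l1 norm (all norms are equivalent).\<close>
definition mat_norm :: "real mat \<Rightarrow> real" where
  "mat_norm A = (\<Sum>i<dim_row A. \<Sum>j<dim_col A. \<bar>A $$ (i,j)\<bar>)"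

end

theory Submission
  imports Defs
begin

lemma sign_prod:
  fixes f :: "'a \<Rightarrow> real"
  assumes "finite S" "B \<subseteq> S" "\<And>x. x \<in> B \<Longrightarrow> f x \<le> 0" "\<And>x. x \<in> S - B \<Longrightarrow> f x \<ge> 0"
  shows "(-1)^card B * prod f S \<ge> 0"
proof -
  have fB: "finite B" using assms(1,2) finite_subset by blast
  have "prod f S = prod f B * prod f (S - B)"
    using assms(1,2) by (metis prod.subset_diff mult.commute)
  moreover have "prod f B = (-1)^card B * prod (\<lambda>x. - f x) B"
    using fB by (induction B rule: finite_induct) auto
  moreover have "prod (\<lambda>x. - f x) B \<ge> 0" using assms(3) by (intro prod_nonneg) auto
  moreover have "prod f (S - B) \<ge> 0" using assms(4) by (intro prod_nonneg) auto
  ultimately show ?thesis by (simp add: power_mult_distrib[symmetric] mult.assoc[symmetric])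
qed

locale ctx =
  fixes n :: nat and mu :: "nat \<Rightarrow> real"
  assumes n1: "n \<ge> 1"
    and mu1: "mu 1 < 1"
    and mudec: "\<forall>k\<in>{1..n}. mu (Suc k) < mu k"
    and mupos: "mu (n + 1) > 0"
begin

lemma mu_mono_strict: "1 \<le> i \<Longrightarrow> i < j \<Longrightarrow> j \<le> n + 1 \<Longrightarrow> mu j < mu i"
proof (induction j)
  case 0 then show ?case by simp
next
  case (Suc j)
  have "mu (Suc j) < mu j" using mudec Suc.prems by auto
  show ?case
  proof (cases "i < j")
    case True then show ?thesis using Suc \<open>mu (Suc j) < mu j\<close> by auto
  next
    case False then have "i = j" using Suc.prems by simp
    then show ?thesis using \<open>mu (Suc j) < mu j\<close> by simp
  qed
qed

lemma mu_mono: "1 \<le> i \<Longrightarrow> i \<le> j \<Longrightarrow> j \<le> n + 1 \<Longrightarrow> mu j \<le> mu i"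
  using mu_mono_strict by (cases "i = j") (auto intro: less_imp_le)

lemma mu_pos: "1 \<le> i \<Longrightarrow> i \<le> n + 1 \<Longrightarrow> mu i > 0"
  using mu_mono[of i "n+1"] mupos by auto

definition nu :: "nat \<Rightarrow> real" where "nu k = mu (k + 2)"
definition a :: real where "a = mu 1"
definition W :: "nat \<Rightarrow> real poly" where "W k = (\<Prod>i\<in>{..<n} - {k}. [:- nu i, 1:])"
definition cc :: "nat \<Rightarrow> real" where "cc k = 1 / (\<Prod>i\<in>{..<n} - {k}. (nu k - nu i))"
definition Lp :: "nat \<Rightarrow> real poly" where "Lp k = smult (cc k) (W k)"
definition om :: "real poly" where "om = (\<Prod>i<n. [:- nu i, 1:])"
definition comb :: "(nat \<Rightarrow> real) \<Rightarrow> real vec" where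
  "comb y = vec n (\<lambda>i. \<Sum>k<n. y k * nu k ^ (n - 1 - i))"

lemma nu_strict: "i < j \<Longrightarrow> j < n \<Longrightarrow> nu j < nu i"
  unfolding nu_def by (rule mu_mono_strict) auto

lemma nu_inj: "i < n \<Longrightarrow> j < n \<Longrightarrow> nu i = nu j \<Longrightarrow> i = j"
  using nu_strict by (metis less_irrefl nat_neq_iff)

lemma nu_lt_a: "k < n \<Longrightarrow> nu k < a"
  unfolding nu_def a_def by (rule mu_mono_strict) auto

lemma nu_pos: "k < n \<Longrightarrow> 0 < nu k" "k < n \<Longrightarrow> nu k < 1"
  using mu_pos[of "k+2"] nu_lt_a[of k] mu1 unfolding nu_def a_def by auto

lemma a_pos: "0 < a" "a < 1" using mu_pos[of 1] mu1 unfolding a_def by auto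

lemma W_poly: "poly (W k) x = (\<Prod>i\<in>{..<n} - {k}. (x - nu i))"
  unfolding W_def poly_prod by simp

lemma Q_nz: "k < n \<Longrightarrow> (\<Prod>i\<in>{..<n} - {k}. (nu k - nu i)) \<noteq> 0"
  using nu_inj by (auto simp: prod_zero_iff)

lemma cc_nz: "k < n \<Longrightarrow> cc k \<noteq> 0"
  using Q_nz unfolding cc_def by simp

lemma Lp_nu: "k < n \<Longrightarrow> j < n \<Longrightarrow> poly (Lp k) (nu j) = (if j = k then 1 else 0)"
proof -
  assume k: "k < n" and j: "j < n"
  show ?thesis
  proof (cases "j = k")
    case True then show ?thesis using Q_nz[OF k] unfolding Lp_def cc_def by (simp add: W_poly)
  next
    case False
    then have "j \<in> {..<n} - {k}" using j by auto
    then have "poly (W k) (nu j) = 0" unfolding W_poly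
      by (intro prod_zero) auto
    then show ?thesis using False unfolding Lp_def by simp
  qed
qed

lemma W_deg: "k < n \<Longrightarrow> degree (W k) = n - 1"
  unfolding W_def by (subst degree_prod_eq_sum_degree) auto

lemma W_lc: "lead_coeff (W k) = 1"
  unfolding W_def by (simp add: lead_coeff_prod)

lemma Lp_deg: "k < n \<Longrightarrow> degree (Lp k) \<le> n - 1"
  unfolding Lp_def using W_deg by simp

lemma Lp_coeff_top: "k < n \<Longrightarrow> coeff (Lp k) (n - 1) = cc k"
proof -
  assume k: "k < n"
  have "coeff (W k) (n - 1) = 1" using W_lc[of k] by (simp add: W_deg k)
  then show ?thesis unfolding Lp_def by simp
qed

lemma card_nu: "card (nu ` {..<n}) = n"
  by (subst card_image) (auto intro: inj_onI nu_inj)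

lemma interp:
  assumes "degree q < n"
  shows "q = (\<Sum>k<n. smult (poly q (nu k)) (Lp k))"
proof (rule poly_eqI_degree[of "nu ` {..<n}"])
  fix x assume "x \<in> nu ` {..<n}"
  then obtain j where j: "j < n" "x = nu j" by auto
  have "poly (\<Sum>k<n. smult (poly q (nu k)) (Lp k)) x = (\<Sum>k<n. poly q (nu k) * poly (Lp k) (nu j))"
    using j by (simp add: poly_sum)
  also have "\<dots> = (\<Sum>k<n. if k = j then poly q (nu j) else 0)"
    using j by (intro sum.cong) (auto simp: Lp_nu)
  also have "\<dots> = poly q x" using j by simp
  finally show "poly q x = poly (\<Sum>k<n. smult (poly q (nu k)) (Lp k)) x" by simp
next
  show "degree q < card (nu ` {..<n})" using assms card_nu by simp
next
  have "degree (\<Sum>k<n. smult (poly q (nu k)) (Lp k)) \<le> n - 1"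
    by (intro degree_sum_le order_trans[OF degree_smult_le] Lp_deg) auto
  then show "degree (\<Sum>k<n. smult (poly q (nu k)) (Lp k)) < card (nu ` {..<n})"
    using card_nu n1 by simp
qed

lemma interp_eval:
  assumes "degree q < n"
  shows "poly q x = (\<Sum>k<n. poly q (nu k) * poly (Lp k) x)"
proof -
  have e: "q = (\<Sum>k<n. smult (poly q (nu k)) (Lp k))" by (rule interp[OF assms])
  have "poly q x = poly (\<Sum>k<n. smult (poly q (nu k)) (Lp k)) x"
    by (rule arg_cong[where f="\<lambda>q. poly q x", OF e])
  then show ?thesis by (simp add: poly_sum)
qed

lemma coeff_ident:
  assumes i: "i < n" and j: "j < n"
  shows "(\<Sum>k<n. coeff (Lp k) (n - 1 - j) * nu k ^ (n - 1 - i)) = (if i = j then 1 else 0)"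
proof -
  let ?q = "monom (1::real) (n - 1 - i)"
  have "degree ?q < n" using i by (simp add: degree_monom_eq)
  then have "?q = (\<Sum>k<n. smult (poly ?q (nu k)) (Lp k))" by (rule interp)
  then have "coeff ?q (n - 1 - j) = coeff (\<Sum>k<n. smult (poly ?q (nu k)) (Lp k)) (n - 1 - j)"
    by simp
  also have "\<dots> = (\<Sum>k<n. coeff (Lp k) (n - 1 - j) * nu k ^ (n - 1 - i))"
    by (simp add: coeff_sum poly_monom mult.commute)
  finally have e: "(if n - 1 - i = n - 1 - j then 1 else 0) = (\<Sum>k<n. coeff (Lp k) (n - 1 - j) * nu k ^ (n - 1 - i))"
    by (simp add: coeff_monom)
  have "(n - 1 - i = n - 1 - j) = (i = j)" using i j by auto
  then show ?thesis using e by simp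
qed

lemma polyset_facts:
  assumes "p \<in> polyset n mu"
  shows "degree p = n" "coeff p n = 1" "poly p a \<ge> 0"
    "\<And>j. j < n \<Longrightarrow> poly p (nu j) * cc j \<le> 0"
proof -
  obtain l where p: "p = (\<Prod>k\<in>{1..n}. [:- l k, 1:])"
    and l: "\<forall>k\<in>{1..n}. mu (Suc k) \<le> l k \<and> l k \<le> mu k"
    using assms unfolding polyset_def by auto
  show deg: "degree p = n" unfolding p by (subst degree_prod_eq_sum_degree) auto
  have "lead_coeff p = 1" unfolding p by (simp add: lead_coeff_prod)
  then show "coeff p n = 1" using deg by simp
  have pp: "poly p x = (\<Prod>k\<in>{1..n}. (x - l k))" for x unfolding p poly_prod by simp
  have "l k \<le> a" if "k \<in> {1..n}" for k
    using l that mu_mono[of 1 k] unfolding a_def by fastforce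
  then show "poly p a \<ge> 0" unfolding pp by (intro prod_nonneg) auto
  fix j assume j: "j < n"
  have s1: "(-1)^card {1..j+1} * poly p (nu j) \<ge> 0" unfolding pp
  proof (rule sign_prod)
    fix k assume k: "k \<in> {1..j+1}"
    then have "mu (k+1) \<ge> mu (j+2)" using j by (intro mu_mono) auto
    then show "nu j - l k \<le> 0" using l k j unfolding nu_def by force
  next
    fix k assume k: "k \<in> {1..n} - {1..j+1}"
    then have "mu k \<le> mu (j+2)" using j by (intro mu_mono) auto
    moreover have "l k \<le> mu k" using l k by auto
    ultimately show "nu j - l k \<ge> 0" unfolding nu_def by linarith
  qed (use j in auto)
  let ?Q = "(\<Prod>i\<in>{..<n} - {j}. (nu j - nu i))"
  have s2: "(-1)^card {..<j} * ?Q \<ge> 0"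
  proof (rule sign_prod)
    fix i assume "i \<in> {..<j}" then show "nu j - nu i \<le> 0" using nu_strict[of i j] j by auto
  next
    fix i assume "i \<in> {..<n} - {j} - {..<j}" then show "nu j - nu i \<ge> 0"
      using nu_strict[of j i] by auto
  qed (use j in auto)
  have Qnz: "?Q \<noteq> 0" using Q_nz[OF j] .
  have cc: "poly p (nu j) * cc j = poly p (nu j) / ?Q" unfolding cc_def by simp
  show "poly p (nu j) * cc j \<le> 0"
  proof (cases "even j")
    case True
    then have "?Q \<ge> 0" "poly p (nu j) \<le> 0" using s1 s2 by auto
    then have "?Q > 0" "poly p (nu j) \<le> 0" using Qnz by (metis less_eq_real_def)+
    then show ?thesis unfolding cc by (simp add: divide_nonpos_pos)
  next
    case False
    then have "?Q \<le> 0" "poly p (nu j) \<ge> 0" using s1 s2 by auto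
    then have "?Q < 0" "poly p (nu j) \<ge> 0" using Qnz by (metis less_eq_real_def)+
    then show ?thesis unfolding cc by (simp add: divide_nonneg_neg)
  qed
qed

lemma frob_row:
  assumes deg: "degree p = n" and mon: "coeff p n = 1" and i: "i < n"
  shows "(\<Sum>j<n. frob p $$ (i, j) * t ^ (n - 1 - j)) = t ^ (n - i) - (if i = 0 then poly p t else 0)"
proof (cases "i = 0")
  case True
  have "(\<Sum>j<n. frob p $$ (i, j) * t ^ (n - 1 - j)) = - (\<Sum>j<n. coeff p (n - Suc j) * t ^ (n - Suc j))"
    using True deg by (simp add: frob_def Let_def sum_negf)
  also have "(\<Sum>j<n. coeff p (n - Suc j) * t ^ (n - Suc j)) = (\<Sum>j<n. coeff p j * t ^ j)"
    by (rule sum.nat_diff_reindex)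
  also have "poly p t = (\<Sum>j<n. coeff p j * t ^ j) + t ^ n"
    using deg mon by (simp add: poly_altdef lessThan_Suc_atMost[symmetric])
  ultimately show ?thesis using True by simp
next
  case False
  have "(\<Sum>j<n. frob p $$ (i, j) * t ^ (n - 1 - j)) = (\<Sum>j<n. if j = i - 1 then t ^ (n - 1 - j) else 0)"
    using False deg i by (intro sum.cong) (auto simp: frob_def Let_def)
  also have "\<dots> = t ^ (n - i)" using i False by (simp add: Suc_diff_Suc)
  finally show ?thesis using False by simp
qed

lemma frob_carrier: "degree p = n \<Longrightarrow> frob p \<in> carrier_mat n n"
  by (simp add: frob_def Let_def)

lemma cc_sum: "i < n \<Longrightarrow> (\<Sum>k<n. cc k * nu k ^ (n - 1 - i)) = (if i = 0 then 1 else 0)"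
proof -
  assume i: "i < n"
  have "(\<Sum>k<n. cc k * nu k ^ (n - 1 - i)) = (\<Sum>k<n. coeff (Lp k) (n - 1 - 0) * nu k ^ (n - 1 - i))"
    using Lp_coeff_top by (intro sum.cong) simp_all
  also have "\<dots> = (if i = 0 then 1 else 0)" using coeff_ident[of i 0] n1 i by simp
  finally show ?thesis .
qed

lemma frob_comb:
  assumes deg: "degree p = n" and mon: "coeff p n = 1"
  shows "frob p *\<^sub>v comb y = comb (\<lambda>k. nu k * y k - cc k * (\<Sum>j<n. poly p (nu j) * y j))"
proof (rule eq_vecI)
  show "dim_vec (frob p *\<^sub>v comb y) = dim_vec (comb y')" for y' using frob_carrier[OF deg] by (simp add: comb_def)
  fix i assume "i < dim_vec (comb (\<lambda>k. nu k * y k - cc k * (\<Sum>j<n. poly p (nu j) * y j)))"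
  then have i: "i < n" by (simp add: comb_def)
  let ?S = "(\<Sum>j<n. poly p (nu j) * y j)"
  have "(frob p *\<^sub>v comb y) $ i = (\<Sum>j<n. frob p $$ (i, j) * (\<Sum>k<n. y k * nu k ^ (n - 1 - j)))"
    using frob_carrier[OF deg] i by (simp add: comb_def scalar_prod_def lessThan_atLeast0)
  also have "\<dots> = (\<Sum>k<n. y k * (\<Sum>j<n. frob p $$ (i, j) * nu k ^ (n - 1 - j)))"
  proof -
    have "(\<Sum>j<n. frob p $$ (i, j) * (\<Sum>k<n. y k * nu k ^ (n - 1 - j)))
       = (\<Sum>j<n. \<Sum>k<n. y k * (frob p $$ (i, j) * nu k ^ (n - 1 - j)))"
      by (simp add: sum_distrib_left mult.left_commute)
    also have "\<dots> = (\<Sum>k<n. \<Sum>j<n. y k * (frob p $$ (i, j) * nu k ^ (n - 1 - j)))"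
      by (rule sum.swap)
    finally show ?thesis by (simp add: sum_distrib_left)
  qed
  also have "\<dots> = (\<Sum>k<n. y k * (nu k ^ (n - i) - (if i = 0 then poly p (nu k) else 0)))"
    using frob_row[OF deg mon i] by simp
  also have "\<dots> = (\<Sum>k<n. (nu k * y k) * nu k ^ (n - 1 - i)) - (if i = 0 then ?S else 0)"
  proof -
    have "nu k ^ (n - i) = nu k * nu k ^ (n - 1 - i)" for k using i
      by (metis Suc_diff_Suc diff_Suc_1 power_Suc diff_commute)
    then show ?thesis by (simp add: algebra_simps sum_subtractf)
  qed
  also have "\<dots> = (\<Sum>k<n. (nu k * y k - cc k * ?S) * nu k ^ (n - 1 - i))"
  proof -
    have "(\<Sum>k<n. (nu k * y k - cc k * ?S) * nu k ^ (n - 1 - i))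
        = (\<Sum>k<n. (nu k * y k) * nu k ^ (n - 1 - i)) - ?S * (\<Sum>k<n. cc k * nu k ^ (n - 1 - i))"
      by (simp add: algebra_simps sum_subtractf sum_distrib_left)
    then show ?thesis using cc_sum[OF i] by simp
  qed
  also have "\<dots> = comb (\<lambda>k. nu k * y k - cc k * ?S) $ i"
    using i by (simp add: comb_def)
  finally show "(frob p *\<^sub>v comb y) $ i = comb (\<lambda>k. nu k * y k - cc k * ?S) $ i" .
qed

definition z :: "nat \<Rightarrow> real" where "z k = \<bar>poly (Lp k) a\<bar>"

lemma W_a_pos: "k < n \<Longrightarrow> poly (W k) a > 0"
  unfolding W_poly using nu_lt_a by (intro prod_pos) auto

lemma z_pos: "k < n \<Longrightarrow> z k > 0"
proof -
  assume k: "k < n"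
  show ?thesis unfolding z_def Lp_def using W_a_pos[OF k] cc_nz[OF k] by simp
qed

lemma om_a: "k < n \<Longrightarrow> poly om a = (a - nu k) * poly (W k) a"
  unfolding om_def W_poly poly_prod by (simp add: prod.remove)

lemma z_eq: "k < n \<Longrightarrow> \<bar>cc k\<bar> * poly om a = (a - nu k) * z k"
  unfolding z_def Lp_def using om_a W_a_pos[of k] by (simp add: abs_mult)

lemma om_nu: "j < n \<Longrightarrow> poly om (nu j) = 0"
  unfolding om_def poly_prod by (intro prod_zero) auto

lemma om_deg: "degree om = n" unfolding om_def by (subst degree_prod_eq_sum_degree) auto
lemma om_lc: "coeff om n = 1"
proof -
  have "lead_coeff om = 1" unfolding om_def by (simp add: lead_coeff_prod)
  then show ?thesis using om_deg by simp
qed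

lemma sum_bound:
  assumes p: "p \<in> polyset n mu"
  shows "(\<Sum>j<n. \<bar>poly p (nu j)\<bar> * z j) \<le> poly om a"
proof -
  note pf = polyset_facts[OF p]
  have "degree (p - om) \<le> n - 1"
  proof (rule degree_le, intro allI impI)
    fix i assume "n - 1 < i"
    then have "n \<le> i" using n1 by simp
    then show "coeff (p - om) i = 0"
    proof (cases "i = n")
      case True then show ?thesis using pf(2) om_lc by simp
    next
      case False
      then have "degree p < i" "degree om < i" using \<open>n \<le> i\<close> pf(1) om_deg by auto
      then show ?thesis by (simp add: coeff_eq_0)
    qed
  qed
  then have "degree (p - om) < n" using n1 by simp
  then have "poly (p - om) a = (\<Sum>k<n. poly (p - om) (nu k) * poly (Lp k) a)" by (rule interp_eval)
  also have "\<dots> = (\<Sum>k<n. poly p (nu k) * poly (Lp k) a)"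
    by (intro sum.cong) (auto simp: om_nu)
  finally have "poly (p - om) a = (\<Sum>k<n. poly p (nu k) * poly (Lp k) a)" .
  moreover have "\<bar>poly p (nu k)\<bar> * z k = - (poly p (nu k) * poly (Lp k) a)" if k: "k < n" for k
  proof -
    have "poly p (nu k) * poly (Lp k) a = (poly p (nu k) * cc k) * poly (W k) a"
      unfolding Lp_def by simp
    also have "\<dots> \<le> 0" using pf(4)[OF k] W_a_pos[OF k] by (simp add: mult_nonpos_nonneg)
    finally show ?thesis unfolding z_def by (simp add: abs_mult[symmetric])
  qed
  ultimately have "(\<Sum>j<n. \<bar>poly p (nu j)\<bar> * z j) = poly om a - poly p a"
    by (simp add: sum_negf)
  then show ?thesis using pf(3) by simp
qed

lemma step:
  assumes p: "p \<in> polyset n mu" and t: "t \<ge> 0" and y: "\<forall>k<n. \<bar>y k\<bar> \<le> t * z k"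
  shows "\<forall>k<n. \<bar>nu k * y k - cc k * (\<Sum>j<n. poly p (nu j) * y j)\<bar> \<le> a * t * z k"
proof (intro allI impI)
  fix k assume k: "k < n"
  have S: "\<bar>\<Sum>j<n. poly p (nu j) * y j\<bar> \<le> t * poly om a"
  proof -
    have "\<bar>\<Sum>j<n. poly p (nu j) * y j\<bar> \<le> (\<Sum>j<n. \<bar>poly p (nu j)\<bar> * (t * z j))"
      using y by (intro order_trans[OF sum_abs] sum_mono) (auto simp: abs_mult intro: mult_left_mono)
    also have "\<dots> = t * (\<Sum>j<n. \<bar>poly p (nu j)\<bar> * z j)" by (simp add: sum_distrib_left mult_ac)
    also have "\<dots> \<le> t * poly om a" using sum_bound[OF p] t by (intro mult_left_mono) auto
    finally show ?thesis .
  qed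
  have "\<bar>nu k * y k - cc k * (\<Sum>j<n. poly p (nu j) * y j)\<bar>
      \<le> nu k * \<bar>y k\<bar> + \<bar>cc k\<bar> * \<bar>\<Sum>j<n. poly p (nu j) * y j\<bar>"
    using nu_pos[OF k] by (simp add: abs_mult order_trans[OF abs_triangle_ineq4])
  also have "\<dots> \<le> nu k * (t * z k) + \<bar>cc k\<bar> * (t * poly om a)"
    using nu_pos[OF k] y k S by (intro add_mono mult_left_mono) auto
  also have "\<dots> = nu k * (t * z k) + t * ((a - nu k) * z k)"
    using z_eq[OF k] by (simp add: mult_ac)
  also have "\<dots> = a * t * z k" by (simp add: algebra_simps)
  finally show "\<bar>nu k * y k - cc k * (\<Sum>j<n. poly p (nu j) * y j)\<bar> \<le> a * t * z k" .
qed

lemma prod_carrier: "set ps \<subseteq> polyset n mu \<Longrightarrow> foldr (\<lambda>p A. frob p * A) ps (1\<^sub>m n) \<in> carrier_mat n n"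
proof (induction ps)
  case Nil then show ?case by simp
next
  case (Cons p ps)
  then have "frob p \<in> carrier_mat n n" using frob_carrier polyset_facts(1) by simp
  then show ?case using Cons by (simp add: mult_carrier_mat)
qed

lemma comb_carrier: "comb y \<in> carrier_vec n" by (simp add: comb_def)

lemma prod_bound:
  assumes "set ps \<subseteq> polyset n mu" "t \<ge> 0" "\<forall>k<n. \<bar>y k\<bar> \<le> t * z k"
  shows "\<exists>y'. foldr (\<lambda>p A. frob p * A) ps (1\<^sub>m n) *\<^sub>v comb y = comb y'
           \<and> (\<forall>k<n. \<bar>y' k\<bar> \<le> a ^ length ps * t * z k)"
  using assms
proof (induction ps)
  case Nil then show ?case using comb_carrier by auto
next
  case (Cons p ps)
  then obtain y1 where y1: "foldr (\<lambda>p A. frob p * A) ps (1\<^sub>m n) *\<^sub>v comb y = comb y1"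
    "\<forall>k<n. \<bar>y1 k\<bar> \<le> a ^ length ps * t * z k" by auto
  have p: "p \<in> polyset n mu" using Cons by simp
  note pf = polyset_facts[OF p]
  have "foldr (\<lambda>p A. frob p * A) (p # ps) (1\<^sub>m n) *\<^sub>v comb y = frob p *\<^sub>v comb y1"
    using prod_carrier[of ps] Cons.prems frob_carrier[OF pf(1)] comb_carrier y1(1) by simp
  also have "\<dots> = comb (\<lambda>k. nu k * y1 k - cc k * (\<Sum>j<n. poly p (nu j) * y1 j))"
    by (rule frob_comb[OF pf(1,2)])
  finally show ?case
    using step[OF p _ y1(2)] Cons.prems a_pos by (intro exI[of _ "(\<lambda>k. nu k * y1 k - cc k * (\<Sum>j<n. poly p (nu j) * y1 j))"]) (auto simp: mult_ac)
qed

definition Y :: "nat \<Rightarrow> nat \<Rightarrow> real" where "Y j k = coeff (Lp k) (n - 1 - j)"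
definition tj :: "nat \<Rightarrow> real" where "tj j = (\<Sum>k<n. \<bar>Y j k\<bar> / z k)"
definition Zs :: real where "Zs = (\<Sum>k<n. z k)"

lemma unit_comb: "j < n \<Longrightarrow> unit_vec n j = comb (Y j)"
proof -
  assume j: "j < n"
  show ?thesis
  proof (intro eq_vecI)
    fix i assume "i < dim_vec (comb (Y j))"
    then have i: "i < n" by (simp add: comb_def)
    show "unit_vec n j $ i = comb (Y j) $ i"
      using coeff_ident[OF i j] i j by (simp add: comb_def Y_def)
  qed (simp add: comb_def)
qed

lemma tj_nonneg: "tj j \<ge> 0" unfolding tj_def using z_pos by (intro sum_nonneg) (auto intro: divide_nonneg_pos)

lemma Y_bound: "k < n \<Longrightarrow> \<bar>Y j k\<bar> \<le> tj j * z k"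
proof -
  assume k: "k < n"
  have "\<bar>Y j k\<bar> / z k \<le> tj j" unfolding tj_def
    by (rule member_le_sum) (use z_pos k in \<open>auto intro: divide_nonneg_pos\<close>)
  then show ?thesis using z_pos[OF k] by (simp add: pos_divide_le_eq)
qed

lemma entry_bound:
  assumes ps: "set ps \<subseteq> polyset n mu" and i: "i < n" and j: "j < n"
  shows "\<bar>foldr (\<lambda>p A. frob p * A) ps (1\<^sub>m n) $$ (i, j)\<bar> \<le> a ^ length ps * tj j * Zs"
proof -
  let ?P = "foldr (\<lambda>p A. frob p * A) ps (1\<^sub>m n)"
  have Pc: "?P \<in> carrier_mat n n" by (rule prod_carrier[OF ps])
  obtain y' where y': "?P *\<^sub>v comb (Y j) = comb y'" "\<forall>k<n. \<bar>y' k\<bar> \<le> a ^ length ps * tj j * z k"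
    using prod_bound[OF ps tj_nonneg[of j], of "Y j"] Y_bound by auto
  have "?P $$ (i, j) = (?P *\<^sub>v unit_vec n j) $ i" using Pc i j by simp
  also have "\<dots> = (\<Sum>k<n. y' k * nu k ^ (n - 1 - i))" using unit_comb[OF j] y'(1) i by (simp add: comb_def)
  finally have "\<bar>?P $$ (i, j)\<bar> \<le> (\<Sum>k<n. \<bar>y' k\<bar> * \<bar>nu k\<bar> ^ (n - 1 - i))"
    by (simp add: order_trans[OF sum_abs] abs_mult power_abs)
  also have "\<dots> \<le> (\<Sum>k<n. a ^ length ps * tj j * z k)"
  proof (intro sum_mono)
    fix k assume "k \<in> {..<n}"
    then have k: "k < n" by simp
    have "\<bar>nu k\<bar> ^ (n - 1 - i) \<le> 1" using nu_pos[OF k] by (simp add: power_le_one)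
    then have "\<bar>y' k\<bar> * \<bar>nu k\<bar> ^ (n - 1 - i) \<le> \<bar>y' k\<bar>" by (simp add: mult_left_le)
    then show "\<bar>y' k\<bar> * \<bar>nu k\<bar> ^ (n - 1 - i) \<le> a ^ length ps * tj j * z k" using y'(2) k by force
  qed
  also have "\<dots> = a ^ length ps * tj j * Zs" unfolding Zs_def by (simp add: sum_distrib_left)
  finally show ?thesis .
qed

lemma main:
  "\<exists>C>0. \<forall>ps. set ps \<subseteq> polyset n mu \<longrightarrow>
     mat_norm (foldr (\<lambda>p A. frob p * A) ps (1\<^sub>m n)) \<le> C * a ^ length ps"
proof (intro exI[of _ "of_nat n * Zs * (\<Sum>j<n. tj j) + 1"] conjI allI impI)
  have "Zs \<ge> 0" unfolding Zs_def using z_pos by (intro sum_nonneg) (auto intro: less_imp_le)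
  moreover have "(\<Sum>j<n. tj j) \<ge> 0" using tj_nonneg by (intro sum_nonneg) auto
  ultimately have C0: "of_nat n * Zs * (\<Sum>j<n. tj j) \<ge> 0" by simp
  then show "of_nat n * Zs * (\<Sum>j<n. tj j) + 1 > 0" by linarith
  fix ps assume ps: "set ps \<subseteq> polyset n mu"
  let ?P = "foldr (\<lambda>p A. frob p * A) ps (1\<^sub>m n)"
  have Pc: "?P \<in> carrier_mat n n" by (rule prod_carrier[OF ps])
  have "mat_norm ?P = (\<Sum>i<n. \<Sum>j<n. \<bar>?P $$ (i, j)\<bar>)" unfolding mat_norm_def using Pc by simp
  also have "\<dots> \<le> (\<Sum>i<n. \<Sum>j<n. a ^ length ps * tj j * Zs)"
    using entry_bound[OF ps] by (intro sum_mono) auto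
  also have "\<dots> = (of_nat n * Zs * (\<Sum>j<n. tj j)) * a ^ length ps"
    by (simp add: sum_distrib_left sum_distrib_right mult_ac)
  also have "\<dots> \<le> (of_nat n * Zs * (\<Sum>j<n. tj j) + 1) * a ^ length ps"
    using a_pos by (intro mult_right_mono) auto
  finally show "mat_norm ?P \<le> (of_nat n * Zs * (\<Sum>j<n. tj j) + 1) * a ^ length ps" .
qed

end

theorem lemma3p2:
  fixes n :: nat and mu :: "nat \<Rightarrow> real"
  assumes "n \<ge> 1"
    and "mu 1 < 1"
    and "\<forall>k\<in>{1..n}. mu (Suc k) < mu k"
    and "mu (n + 1) > 0"
  shows "\<exists>C>0. \<exists>c. 0 < c \<and> c < 1 \<and>
           (\<forall>m\<ge>1. \<forall>ps :: real poly list. length ps = m \<and> set ps \<subseteq> polyset n mu \<longrightarrow>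
              mat_norm (foldr (\<lambda>p A. frob p * A) ps (1\<^sub>m n)) \<le> C * c ^ m)"
proof -
  interpret ctx n mu using assms by unfold_locales auto
  obtain C where C: "C > 0" "\<forall>ps. set ps \<subseteq> polyset n mu \<longrightarrow>
     mat_norm (foldr (\<lambda>p A. frob p * A) ps (1\<^sub>m n)) \<le> C * a ^ length ps"
    using main by blast
  show ?thesis using C a_pos by blast
qed

end
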